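(* For every $\gamma > 0$ and $0 < \alpha < 1$, the following holds for all sufficiently large $n$. Let $G$ be an $(n,(3-\gamma)n)$-multigraph and $M$ a rainbow matching of maximum size in $G$ which has a $7$-auxiliary matching $N$ of size at least $(1-\gamma)|M|$. Then $|N_\alpha| \le \frac{20\gamma}{1-\alpha}\, n$.
   Context: An $(n,v)$-multigraph is a multigraph whose edges are coloured with a set of $n$ colours (parallel edges allowed, with distinct colours) such that each colour class is a vertex-disjoint union of cliques on at least $2$ vertices which together have at least $v$ vertices. A rainbow matching is a matching whose edges have pairwise distinct colours. Let $V$ be the vertex set of $G$ and $C_0$ the set of colours not used on $M$. A $t$-auxiliary matching for $M$ is a matching $N$ each of whose edges has one endpoint in $V\setminus V(M)$ and the other in $V(M)$, such that for each edge of $N$ its pair of endpoints is joined by edges of at least $t$ distinct colours from $C_0$, and no two edges of $N$ intersect the same edge of $M$. $M_N\subseteq M$ is the set of edges of $M$ intersecting an edge of $N$; for $e\in M_N$, $x_e$ is the endpoint of $e$ in $V(N)$, $m(x_e)$ the other endpoint of $e$, and $v_e$ the vertex matched to $x_e$ in $N$; $C_N$ is the set of colours of edges of $M_N$. $N_\alpha \subseteq N$ is the set of edges $v_e x_e \in N$ such that the pair $v_e m(x_e)$ is joined by edges of at most $\alpha |C_N|$ distinct colours from $C_N$. *)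

theory Defs
  imports Complex_Main
begin

(* A coloured multigraph is given by a vertex set V, a colour set C and, for each
   colour c, the family K c of cliques forming colour class c. *)

definition has_edge :: "('c \<Rightarrow> 'v set set) \<Rightarrow> 'c \<Rightarrow> 'v \<Rightarrow> 'v \<Rightarrow> bool" where
  "has_edge K c x y \<longleftrightarrow> x \<noteq> y \<and> (\<exists>Q\<in>K c. x \<in> Q \<and> y \<in> Q)"

definition nv_multigraph :: "'v set \<Rightarrow> 'c set \<Rightarrow> ('c \<Rightarrow> 'v set set) \<Rightarrow> nat \<Rightarrow> real \<Rightarrow> bool" where
  "nv_multigraph V C K n v \<longleftrightarrow>
     finite V \<and> finite C \<and> card C = n \<and>
     (\<forall>c. c \<notin> C \<longrightarrow> K c = {}) \<and>
     (\<forall>c\<in>C. (\<forall>Q\<in>K c. Q \<subseteq> V \<and> card Q \<ge> 2) \<and>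
             (\<forall>Q\<in>K c. \<forall>Q'\<in>K c. Q \<noteq> Q' \<longrightarrow> Q \<inter> Q' = {}) \<and>
             real (card (\<Union>(K c))) \<ge> v)"

definition rainbow_matching :: "'c set \<Rightarrow> ('c \<Rightarrow> 'v set set) \<Rightarrow> ('v set \<times> 'c) set \<Rightarrow> bool" where
  "rainbow_matching C K M \<longleftrightarrow>
     (\<forall>(e, c)\<in>M. c \<in> C \<and> (\<exists>x y. e = {x, y} \<and> has_edge K c x y)) \<and>
     (\<forall>(e, c)\<in>M. \<forall>(e', c')\<in>M. (e, c) \<noteq> (e', c') \<longrightarrow> e \<inter> e' = {} \<and> c \<noteq> c')"

definition max_rainbow_matching :: "'c set \<Rightarrow> ('c \<Rightarrow> 'v set set) \<Rightarrow> ('v set \<times> 'c) set \<Rightarrow> bool" where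
  "max_rainbow_matching C K M \<longleftrightarrow> rainbow_matching C K M \<and>
     (\<forall>M'. rainbow_matching C K M' \<longrightarrow> card M' \<le> card M)"

definition matched_verts :: "('v set \<times> 'c) set \<Rightarrow> 'v set" where
  "matched_verts M = \<Union>(fst ` M)"

definition unused_colours :: "'c set \<Rightarrow> ('v set \<times> 'c) set \<Rightarrow> 'c set" where
  "unused_colours C M = C - snd ` M"

definition aux_matching :: "nat \<Rightarrow> 'v set \<Rightarrow> 'c set \<Rightarrow> ('c \<Rightarrow> 'v set set) \<Rightarrow>
    ('v set \<times> 'c) set \<Rightarrow> 'v set set \<Rightarrow> bool" where
  "aux_matching t V C K M N \<longleftrightarrow>
     (\<forall>f\<in>N. \<exists>u x. f = {u, x} \<and> u \<in> V - matched_verts M \<and> x \<in> matched_verts M \<and>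
               card {c \<in> unused_colours C M. has_edge K c u x} \<ge> t) \<and>
     (\<forall>f\<in>N. \<forall>f'\<in>N. f \<noteq> f' \<longrightarrow> f \<inter> f' = {}) \<and>
     (\<forall>f\<in>N. \<forall>f'\<in>N. f \<noteq> f' \<longrightarrow> \<not> (\<exists>e\<in>fst ` M. f \<inter> e \<noteq> {} \<and> f' \<inter> e \<noteq> {}))"

definition M_N :: "('v set \<times> 'c) set \<Rightarrow> 'v set set \<Rightarrow> ('v set \<times> 'c) set" where
  "M_N M N = {(e, c) \<in> M. \<exists>f\<in>N. f \<inter> e \<noteq> {}}"

definition C_N :: "('v set \<times> 'c) set \<Rightarrow> 'v set set \<Rightarrow> 'c set" where
  "C_N M N = snd ` M_N M N"

definition N_alpha :: "real \<Rightarrow> ('c \<Rightarrow> 'v set set) \<Rightarrow> ('v set \<times> 'c) set \<Rightarrow> 'v set set \<Rightarrow> 'v set set" where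
  "N_alpha \<alpha> K M N = {f \<in> N. \<exists>u x y. f = {u, x} \<and> u \<notin> matched_verts M \<and>
       {x, y} \<in> fst ` M \<and> x \<noteq> y \<and>
       real (card {c \<in> C_N M N. has_edge K c u y}) \<le> \<alpha> * real (card (C_N M N))}"

end

theory Submission imports Defs begin

lemma has_edge_sym: "has_edge K c x y \<longleftrightarrow> has_edge K c y x"
  unfolding has_edge_def by blast

lemma mem2: "f = {a,b} \<Longrightarrow> a \<in> f \<and> b \<in> f" by auto
lemma in2: "f = {a,b} \<Longrightarrow> z \<in> f \<Longrightarrow> z = a \<or> z = b" by auto

lemma card_le_rel:
  assumes "finite B" and ex: "\<And>p. p \<in> A \<Longrightarrow> \<exists>b\<in>B. R p b"
    and un: "\<And>p p' b. p \<in> A \<Longrightarrow> p' \<in> A \<Longrightarrow> b \<in> B \<Longrightarrow> R p b \<Longrightarrow> R p' b \<Longrightarrow> p = p'"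
  shows "card A \<le> card B"
proof -
  define g where "g p = (SOME b. b \<in> B \<and> R p b)" for p
  have g: "g p \<in> B \<and> R p (g p)" if "p \<in> A" for p
    unfolding g_def using ex[OF that] by (metis (mono_tags, lifting) someI_ex)
  have "inj_on g A"
  proof (rule inj_onI)
    fix p p' assume "p \<in> A" "p' \<in> A" "g p = g p'"
    thus "p = p'" using g un by metis
  qed
  moreover have "g ` A \<subseteq> B" using g by blast
  ultimately show ?thesis using card_inj_on_le assms(1) by blast
qed

lemma card_filter_sum: "finite B \<Longrightarrow> card {y\<in>B. P y} = (\<Sum>y\<in>B. if P y then 1 else (0::nat))"
proof -
  assume fB: "finite B"
  have "card {y\<in>B. P y} = sum (\<lambda>_. 1) {y\<in>B. P y}" by (rule card_eq_sum)
  also have "\<dots> = (\<Sum>y\<in>B. if P y then 1 else 0)" by (rule sum.inter_filter[OF fB])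
  finally show ?thesis .
qed

lemma sum_swap_card: "finite A \<Longrightarrow> finite B \<Longrightarrow>
   (\<Sum>x\<in>A. card {y\<in>B. R x y}) = (\<Sum>y\<in>B. card {x\<in>A. R x y})"
proof -
  assume fA: "finite A" and fB: "finite B"
  have 1: "card {y\<in>B. R x y} = (\<Sum>y\<in>B. if R x y then 1 else 0)" for x
    using card_filter_sum[OF fB] .
  have 2: "card {x\<in>A. R x y} = (\<Sum>x\<in>A. if R x y then 1 else 0)" for y
    using card_filter_sum[OF fA] .
  show ?thesis unfolding 1 2 by (rule sum.swap)
qed

locale rsw =
  fixes V :: "nat set" and C :: "nat set" and K :: "nat \<Rightarrow> nat set set"
    and M :: "(nat set \<times> nat) set" and N :: "nat set set" and n :: nat and w :: real
  assumes G: "nv_multigraph V C K n w"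
    and RM: "max_rainbow_matching C K M"
    and AX: "aux_matching 7 V C K M N"
begin

definition "VM = matched_verts M"
definition "U = V - VM"
definition "C0 = unused_colours C M"
definition "vv f = the_elem (f - VM)"
definition "xx f = the_elem (f \<inter> VM)"
definition "me z = (THE p. p \<in> M \<and> z \<in> fst p)"
definition "yy f = the_elem (fst (me (xx f)) - {xx f})"
definition "col f = snd (me (xx f))"

lemma finV: "finite V" and finC: "finite C" and cardC: "card C = n"
  using G unfolding nv_multigraph_def by auto

lemma Kout: "c \<notin> C \<Longrightarrow> K c = {}"
  using G unfolding nv_multigraph_def by auto

lemma cliq: "Q \<in> K c \<Longrightarrow> Q \<subseteq> V \<and> 2 \<le> card Q \<and> c \<in> C"
  using G Kout unfolding nv_multigraph_def by fastforce

lemma cliq_fin: "Q \<in> K c \<Longrightarrow> finite Q"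
  using cliq[of Q c] by (metis card.infinite not_numeral_le_zero)

lemma cliq_disj: "Q \<in> K c \<Longrightarrow> Q' \<in> K c \<Longrightarrow> Q \<noteq> Q' \<Longrightarrow> Q \<inter> Q' = {}"
  using G cliq unfolding nv_multigraph_def by metis

lemma cover: "c \<in> C \<Longrightarrow> w \<le> real (card (\<Union>(K c)))"
  using G unfolding nv_multigraph_def by auto

lemma has_edge_V: "has_edge K c x y \<Longrightarrow> x \<in> V \<and> y \<in> V \<and> c \<in> C"
  unfolding has_edge_def using cliq by blast

lemma RMr: "rainbow_matching C K M"
  using RM unfolding max_rainbow_matching_def by auto

lemma RMmax: "rainbow_matching C K M' \<Longrightarrow> card M' \<le> card M"
  using RM unfolding max_rainbow_matching_def by auto

lemma Medge: "(e,c) \<in> M \<Longrightarrow> c \<in> C \<and> (\<exists>x y. e = {x,y} \<and> has_edge K c x y)"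
  using RMr unfolding rainbow_matching_def by fast

lemma Mdisj: "(e,c) \<in> M \<Longrightarrow> (e',c') \<in> M \<Longrightarrow> (e,c) \<noteq> (e',c') \<Longrightarrow> e \<inter> e' = {} \<and> c \<noteq> c'"
  using RMr unfolding rainbow_matching_def by fast

lemma Mdisj': "p \<in> M \<Longrightarrow> p' \<in> M \<Longrightarrow> p \<noteq> p' \<Longrightarrow> fst p \<inter> fst p' = {} \<and> snd p \<noteq> snd p'"
  using Mdisj[of "fst p" "snd p" "fst p'" "snd p'"] by simp

lemma inj_snd: "inj_on snd M"
  unfolding inj_on_def using Mdisj' by blast

lemma Mfin: "finite M"
proof -
  have "snd ` M \<subseteq> C" using Medge by fastforce
  hence "finite (snd ` M)" using finC finite_subset by blast
  thus ?thesis using inj_snd finite_imageD by blast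
qed

lemma cardM: "card M \<le> n"
proof -
  have "snd ` M \<subseteq> C" using Medge by fastforce
  hence "card (snd ` M) \<le> card C" using finC card_mono by blast
  thus ?thesis using inj_snd card_image cardC by metis
qed

lemma VM_V: "VM \<subseteq> V"
  unfolding VM_def matched_verts_def using Medge has_edge_V by fastforce

lemma me_eq: "p \<in> M \<Longrightarrow> z \<in> fst p \<Longrightarrow> me z = p"
  unfolding me_def
proof (rule the_equality)
  assume "p \<in> M" "z \<in> fst p" thus "p \<in> M \<and> z \<in> fst p" by simp
next
  fix p' assume "p \<in> M" "z \<in> fst p" "p' \<in> M \<and> z \<in> fst p'"
  thus "p' = p" using Mdisj' by blast
qed

lemma me: "z \<in> VM \<Longrightarrow> me z \<in> M \<and> z \<in> fst (me z)"
proof -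
  assume "z \<in> VM"
  then obtain p where "p \<in> M" "z \<in> fst p" unfolding VM_def matched_verts_def by auto
  thus ?thesis using me_eq by simp
qed

lemma AX1: "\<forall>f\<in>N. \<exists>u x. f = {u, x} \<and> u \<in> V - matched_verts M \<and> x \<in> matched_verts M \<and>
               card {c \<in> unused_colours C M. has_edge K c u x} \<ge> 7"
  using AX unfolding aux_matching_def by (rule conjunct1)

lemma AX2: "\<forall>f\<in>N. \<forall>f'\<in>N. f \<noteq> f' \<longrightarrow> f \<inter> f' = {}"
  using AX unfolding aux_matching_def by (metis (no_types, lifting))

lemma AX3: "\<forall>f\<in>N. \<forall>f'\<in>N. f \<noteq> f' \<longrightarrow> \<not> (\<exists>e\<in>fst ` M. f \<inter> e \<noteq> {} \<and> f' \<inter> e \<noteq> {})"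
  using AX unfolding aux_matching_def by (metis (no_types, lifting))

lemma Nprop: "f \<in> N \<Longrightarrow> f = {vv f, xx f} \<and> vv f \<in> U \<and> xx f \<in> VM \<and>
   7 \<le> card {c \<in> C0. has_edge K c (vv f) (xx f)}"
proof -
  assume fN: "f \<in> N"
  obtain u x where f: "f = {u,x}" "u \<in> V - VM" "x \<in> VM"
     "card {c \<in> C0. has_edge K c u x} \<ge> 7"
    using bspec[OF AX1 fN] unfolding VM_def C0_def by blast
  have "f - VM = {u}" using f by blast
  moreover have "f \<inter> VM = {x}" using f by blast
  ultimately have "vv f = u" "xx f = x" unfolding vv_def xx_def by auto
  thus ?thesis using f unfolding U_def by simp
qed

lemma Nmem: "f \<in> N \<Longrightarrow> vv f \<in> f \<and> xx f \<in> f"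
  using Nprop[THEN conjunct1] by (rule mem2)

lemma blk: "f \<in> N \<Longrightarrow> me (xx f) \<in> M \<and> fst (me (xx f)) = {xx f, yy f} \<and> xx f \<noteq> yy f \<and>
   has_edge K (col f) (xx f) (yy f) \<and> col f \<in> C \<and> yy f \<in> VM"
proof -
  assume "f \<in> N"
  hence x: "xx f \<in> VM" using Nprop by blast
  have m: "me (xx f) \<in> M" "xx f \<in> fst (me (xx f))" using me[OF x] by auto
  obtain e c where ec: "me (xx f) = (e,c)" by (cases "me (xx f)")
  have ecM: "(e,c) \<in> M" and xe: "xx f \<in> e" using m ec by auto
  have "c \<in> C \<and> (\<exists>x y. e = {x,y} \<and> has_edge K c x y)" using Medge[OF ecM] .
  then obtain p q where pq: "e = {p,q}" "has_edge K c p q" and cC: "c \<in> C" by blast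
  have pq': "p \<noteq> q" using pq(2) unfolding has_edge_def by simp
  define z where "z = (if xx f = p then q else p)"
  have ez: "e = {xx f, z}" "z \<noteq> xx f" using xe pq pq' unfolding z_def by auto
  have hz: "has_edge K c (xx f) z"
  proof (cases "xx f = p")
    case True thus ?thesis using pq unfolding z_def by simp
  next
    case False hence "xx f = q" using xe pq by blast
    thus ?thesis using pq False has_edge_sym unfolding z_def by metis
  qed
  have "e - {xx f} = {z}" using ez by blast
  hence yz: "yy f = z" unfolding yy_def ec by simp
  have cf: "col f = c" unfolding col_def ec by simp
  have "z \<in> VM" unfolding VM_def matched_verts_def using ecM ez by force
  thus ?thesis using m ec ez hz yz cf cC by simp
qed

lemma Ninj: "f \<in> N \<Longrightarrow> g \<in> N \<Longrightarrow> f \<noteq> g \<Longrightarrow> vv f \<noteq> vv g \<and> xx f \<noteq> xx g \<and> me (xx f) \<noteq> me (xx g)"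
proof -
  assume a: "f \<in> N" "g \<in> N" "f \<noteq> g"
  have d: "f \<inter> g = {}" using bspec[OF bspec[OF AX2 a(1)] a(2)] a(3) by (rule mp)
  have nd: "\<not> (\<exists>e\<in>fst ` M. f \<inter> e \<noteq> {} \<and> g \<inter> e \<noteq> {})"
    using bspec[OF bspec[OF AX3 a(1)] a(2)] a(3) by (rule mp)
  have "vv f \<in> f \<and> xx f \<in> f" using a Nmem by blast
  moreover have "vv g \<in> g \<and> xx g \<in> g" using a Nmem by blast
  ultimately have "vv f \<in> f" "xx f \<in> f" "vv g \<in> g" "xx g \<in> g" by auto
  moreover have "me (xx f) \<noteq> me (xx g)"
  proof
    assume eq: "me (xx f) = me (xx g)"
    have b1: "me (xx f) \<in> M" "xx f \<in> fst (me (xx f))" using me Nprop a(1) by blast+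
    have "xx g \<in> fst (me (xx g))" using me Nprop a(2) by blast
    hence "xx g \<in> fst (me (xx f))" using eq by simp
    moreover have "fst (me (xx f)) \<in> fst ` M" using b1 by simp
    ultimately have "f \<inter> fst (me (xx f)) \<noteq> {} \<and> g \<inter> fst (me (xx f)) \<noteq> {}"
      using b1 \<open>xx f \<in> f\<close> \<open>xx g \<in> g\<close> by blast
    thus False using nd \<open>fst (me (xx f)) \<in> fst ` M\<close> by blast
  qed
  moreover have "vv f \<noteq> vv g" using d \<open>vv f \<in> f\<close> \<open>vv g \<in> g\<close> by (metis IntI empty_iff)
  moreover have "xx f \<noteq> xx g" using d \<open>xx f \<in> f\<close> \<open>xx g \<in> g\<close> by (metis IntI empty_iff)
  ultimately show ?thesis by blast
qed

lemma Ninj2: "f \<in> N \<Longrightarrow> g \<in> N \<Longrightarrow> f \<noteq> g \<Longrightarrow> col f \<noteq> col g \<and> {xx f, yy f} \<inter> {xx g, yy g} = {}"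
proof -
  assume a: "f \<in> N" "g \<in> N" "f \<noteq> g"
  have "me (xx f) \<noteq> me (xx g)" using Ninj a by blast
  moreover have "me (xx f) \<in> M" using blk[OF a(1)] by simp
  moreover have "me (xx g) \<in> M" using blk[OF a(2)] by simp
  ultimately have "fst (me (xx f)) \<inter> fst (me (xx g)) = {} \<and> snd (me (xx f)) \<noteq> snd (me (xx g))"
    using Mdisj' by blast
  moreover have "fst (me (xx f)) = {xx f, yy f}" using blk[OF a(1)] by blast
  moreover have "fst (me (xx g)) = {xx g, yy g}" using blk[OF a(2)] by blast
  ultimately show ?thesis unfolding col_def by simp
qed

lemma inj_vv: "inj_on vv N" unfolding inj_on_def using Ninj by blast
lemma inj_xx: "inj_on xx N" unfolding inj_on_def using Ninj by blast
lemma inj_col: "inj_on col N" unfolding inj_on_def using Ninj2 by blast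
lemma inj_yy: "inj_on yy N" unfolding inj_on_def using Ninj2 by blast

lemma Nfin: "finite N"
proof -
  have "vv ` N \<subseteq> V"
  proof
    fix z assume "z \<in> vv ` N"
    then obtain f where "f \<in> N" "z = vv f" by blast
    hence "z \<in> U" using Nprop by blast
    thus "z \<in> V" unfolding U_def by blast
  qed
  thus ?thesis using finV inj_vv finite_imageD finite_subset by blast
qed


lemma choose_c0: "finite T \<Longrightarrow> T \<subseteq> N \<Longrightarrow> card T \<le> 7 \<Longrightarrow>
   \<exists>c0. inj_on c0 T \<and> (\<forall>t\<in>T. c0 t \<in> C0 \<and> has_edge K (c0 t) (vv t) (xx t))"
proof (induction T rule: finite_induct)
  case empty thus ?case by simp
next
  case (insert t T)
  hence "T \<subseteq> N" "card T \<le> 7" by auto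
  then obtain c0 where c0: "inj_on c0 T" "\<forall>s\<in>T. c0 s \<in> C0 \<and> has_edge K (c0 s) (vv s) (xx s)"
    using insert.IH by blast
  have cT: "card T \<le> 6" using insert by simp
  define Opt where "Opt = {c \<in> C0. has_edge K c (vv t) (xx t)}"
  have tN: "t \<in> N" using insert by simp
  have "7 \<le> card Opt" using Nprop[OF tN] unfolding Opt_def by blast
  moreover have "card (c0 ` T) \<le> 6" using card_image_le[OF insert(1), of c0] cT by linarith
  moreover have "finite (c0 ` T)" using insert(1) by simp
  ultimately have "\<not> Opt \<subseteq> c0 ` T"
  proof -
    assume a: "7 \<le> card Opt" "card (c0 ` T) \<le> 6" "finite (c0 ` T)"
    show ?thesis
    proof
      assume "Opt \<subseteq> c0 ` T"
      hence "card Opt \<le> card (c0 ` T)" using a(3) by (rule card_mono[rotated])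
      thus False using a by linarith
    qed
  qed
  then obtain c where c: "c \<in> Opt" "c \<notin> c0 ` T" by blast
  define c1 where "c1 = c0(t := c)"
  have i1: "inj_on c1 T" unfolding c1_def using c0(1) c(2) by (rule inj_on_fun_updI)
  have "c1 ` T = c0 ` T" unfolding c1_def using insert(2) by auto
  hence "c1 t \<notin> c1 ` (T - {t})" using c(2) insert(2) unfolding c1_def by simp
  hence "inj_on c1 (insert t T)" using i1 by simp
  moreover have "\<forall>s\<in>insert t T. c1 s \<in> C0 \<and> has_edge K (c1 s) (vv s) (xx s)"
    using c0(2) c(1) insert(2) unfolding c1_def Opt_def by auto
  ultimately show ?case by blast
qed

lemma rm_intro: "(\<And>p. p \<in> X \<Longrightarrow> snd p \<in> C \<and> (\<exists>x y. fst p = {x,y} \<and> has_edge K (snd p) x y)) \<Longrightarrow>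
  (\<And>p p'. p \<in> X \<Longrightarrow> p' \<in> X \<Longrightarrow> p \<noteq> p' \<Longrightarrow> fst p \<inter> fst p' = {} \<and> snd p \<noteq> snd p') \<Longrightarrow>
  rainbow_matching C K X"
  unfolding rainbow_matching_def by fastforce

lemma UVM: "U \<inter> VM = {}" unfolding U_def by blast

lemma Mfst_VM: "p \<in> M \<Longrightarrow> fst p \<subseteq> VM"
  unfolding VM_def matched_verts_def by auto

lemma Nv: "f \<in> N \<Longrightarrow> vv f \<in> U" using Nprop[THEN conjunct2, THEN conjunct1] .
lemma Nx: "f \<in> N \<Longrightarrow> xx f \<in> VM" using Nprop[THEN conjunct2, THEN conjunct2, THEN conjunct1] .
lemma col_C: "f \<in> N \<Longrightarrow> col f \<in> C" using blk[THEN conjunct2, THEN conjunct2, THEN conjunct2, THEN conjunct2, THEN conjunct1] .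
lemma Ny: "f \<in> N \<Longrightarrow> yy f \<in> VM" using blk[THEN conjunct2, THEN conjunct2, THEN conjunct2, THEN conjunct2, THEN conjunct2] .

lemma col_M: "t \<in> N \<Longrightarrow> col t \<in> snd ` M"
  using blk unfolding col_def by blast

lemma C0_M: "c \<in> C0 \<Longrightarrow> c \<notin> snd ` M \<and> c \<in> C"
  unfolding C0_def unused_colours_def by blast


lemma xx_notin_F: "t \<in> N \<Longrightarrow> s \<in> N \<Longrightarrow> xx t \<noteq> yy s"
proof (cases "t = s")
  case True assume "t \<in> N" thus ?thesis using blk[of t] True by simp
next
  case False assume "t \<in> N" "s \<in> N" thus ?thesis using Ninj2[OF _ _ False] by auto
qed

lemma augment:
  assumes T: "T \<subseteq> N" "card T \<le> 7" and A0: "A0 \<subseteq> N" "T \<inter> A0 = {}"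
    and Efin: "finite E"
    and Ee: "\<And>p. p \<in> E \<Longrightarrow> snd p \<in> col ` (T \<union> A0) \<and> (\<exists>x y. fst p = {x,y} \<and> has_edge K (snd p) x y)"
    and Ed: "\<And>p p'. p \<in> E \<Longrightarrow> p' \<in> E \<Longrightarrow> p \<noteq> p' \<Longrightarrow> fst p \<inter> fst p' = {} \<and> snd p \<noteq> snd p'"
    and Ev: "\<And>p. p \<in> E \<Longrightarrow> fst p \<subseteq> (U - vv`T) \<union> yy`T \<union> xx`A0 \<union> yy`A0"
    and Ec: "card A0 < card E"
  shows False
proof -
  have finT: "finite T" using T(1) Nfin finite_subset by blast
  have finA: "finite A0" using A0(1) Nfin finite_subset by blast
  obtain c0 where c0: "inj_on c0 T" "\<And>t. t \<in> T \<Longrightarrow> c0 t \<in> C0 \<and> has_edge K (c0 t) (vv t) (xx t)"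
    using choose_c0[OF finT T] by blast
  define R where "R = (\<lambda>t. me (xx t)) ` (T \<union> A0)"
  define Sw where "Sw = (\<lambda>t. ({vv t, xx t}, c0 t)) ` T"
  define F where "F = (U - vv`T) \<union> yy`T \<union> xx`A0 \<union> yy`A0"
  have TA: "T \<union> A0 \<subseteq> N" using T A0 by blast
  have RM: "R \<subseteq> M" unfolding R_def using TA blk by blast
  have injR: "inj_on (\<lambda>t. me (xx t)) (T \<union> A0)"
  proof (rule inj_onI)
    fix a b assume ab: "a \<in> T \<union> A0" "b \<in> T \<union> A0" "me (xx a) = me (xx b)"
    show "a = b"
    proof (rule ccontr)
      assume "a \<noteq> b"
      moreover have "a \<in> N" "b \<in> N" using ab TA by blast+
      ultimately show False using Ninj[of a b] ab(3) by simp
    qed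
  qed
  have cardR: "card R = card T + card A0"
    unfolding R_def using card_image[OF injR] card_Un_disjoint[OF finT finA A0(2)] by simp
  have injS: "inj_on (\<lambda>t. ({vv t, xx t}, c0 t)) T"
    using c0(1) unfolding inj_on_def by simp
  have cardS: "card Sw = card T" unfolding Sw_def using card_image[OF injS] .
  have F1: "xx t \<notin> fst p \<and> yy t \<notin> fst p" if "p \<in> M - R" "t \<in> T \<union> A0" for p t
  proof -
    have tN: "t \<in> N" using that TA by blast
    have "me (xx t) \<in> R" unfolding R_def using that by blast
    hence "p \<noteq> me (xx t)" using that by blast
    moreover have "me (xx t) \<in> M" using blk[OF tN] by blast
    ultimately have "fst p \<inter> fst (me (xx t)) = {}" using Mdisj' that by blast
    moreover have "fst (me (xx t)) = {xx t, yy t}" using blk[OF tN] by blast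
    ultimately show ?thesis by blast
  qed
  have F3: "snd p \<notin> col ` (T \<union> A0)" if "p \<in> M - R" for p
  proof
    assume "snd p \<in> col ` (T \<union> A0)"
    then obtain t where t: "t \<in> T \<union> A0" "snd p = col t" by blast
    have tN: "t \<in> N" using t TA by blast
    have "me (xx t) \<in> R" unfolding R_def using t by blast
    hence "p \<noteq> me (xx t)" using that by blast
    moreover have "me (xx t) \<in> M" using blk[OF tN] by blast
    ultimately have "snd p \<noteq> snd (me (xx t))" using Mdisj' that by blast
    thus False using t(2) unfolding col_def by simp
  qed
  have F5: "vv t \<notin> F \<and> xx t \<notin> F" if "t \<in> T" for t
  proof -
    have tN: "t \<in> N" using that T by blast
    have v: "vv t \<in> U" "xx t \<in> VM" using Nprop[OF tN] by blast+
    have "yy ` T \<subseteq> VM" "yy ` A0 \<subseteq> VM" "xx ` A0 \<subseteq> VM" using TA blk Nprop by blast+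
    hence "vv t \<notin> yy ` T \<union> xx ` A0 \<union> yy ` A0" using v UVM by blast
    hence "vv t \<notin> F" unfolding F_def using that by blast
    moreover have "xx t \<notin> U" using v UVM by blast
    moreover have "xx t \<notin> yy ` T" using xx_notin_F tN T by blast
    moreover have "xx t \<notin> yy ` A0" using xx_notin_F tN A0 by blast
    moreover have "xx t \<notin> xx ` A0"
      using inj_on_image_mem_iff[OF inj_xx tN A0(1)] that A0(2) by blast
    ultimately show ?thesis unfolding F_def by blast
  qed
  have F6: "F \<inter> fst p = {}" if "p \<in> M - R" for p
  proof -
    have "fst p \<subseteq> VM" using that Mfst_VM by blast
    hence "U \<inter> fst p = {}" using UVM by blast
    moreover have "yy ` T \<inter> fst p = {}" "xx ` A0 \<inter> fst p = {}" "yy ` A0 \<inter> fst p = {}"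
      using F1[OF that] by blast+
    ultimately show ?thesis unfolding F_def by blast
  qed
  define M' where "M' = (M - R) \<union> Sw \<union> E"
  have rm: "rainbow_matching C K M'"
  proof (rule rm_intro)
    fix p assume "p \<in> M'"
    hence "p \<in> M \<or> p \<in> Sw \<or> p \<in> E" unfolding M'_def by blast
    thus "snd p \<in> C \<and> (\<exists>x y. fst p = {x,y} \<and> has_edge K (snd p) x y)"
    proof (elim disjE)
      assume "p \<in> M" thus ?thesis using Medge[of "fst p" "snd p"] by simp
    next
      assume "p \<in> Sw"
      then obtain t where t: "t \<in> T" "p = ({vv t, xx t}, c0 t)" unfolding Sw_def by blast
      have "c0 t \<in> C0" "has_edge K (c0 t) (vv t) (xx t)" using c0(2)[OF t(1)] by auto
      moreover have "c0 t \<in> C" using C0_M calculation(1) by blast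
      ultimately show ?thesis using t(2) by auto
    next
      assume pE: "p \<in> E"
      have "col ` (T \<union> A0) \<subseteq> C" using TA col_C by blast
      moreover have "snd p \<in> col ` (T \<union> A0)" using Ee[OF pE] by (rule conjunct1)
      ultimately have "snd p \<in> C" by (rule subsetD)
      moreover have "\<exists>x y. fst p = {x,y} \<and> has_edge K (snd p) x y" using Ee[OF pE] by (rule conjunct2)
      ultimately show ?thesis by (rule conjI)
    qed
  next
    fix p p' assume pp: "p \<in> M'" "p' \<in> M'" "p \<noteq> p'"
    define P :: "nat set \<times> nat \<Rightarrow> nat set \<times> nat \<Rightarrow> bool" where "P = (\<lambda>p p'. fst p \<inter> fst p' = {} \<and> snd p \<noteq> snd p')"
    have Psym: "P p p' \<Longrightarrow> P p' p" for p p' unfolding P_def by (metis Int_commute)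
    have AB: "P p p'" if h: "p \<in> M - R" "p' \<in> Sw" for p p'
    proof -
      obtain t where t: "t \<in> T" "p' = ({vv t, xx t}, c0 t)" using h unfolding Sw_def by blast
      have tN: "t \<in> N" using t(1) T(1) by blast
      have "vv t \<in> U" using Nv[OF tN] .
      moreover have "fst p \<subseteq> VM" using h(1) Mfst_VM by blast
      ultimately have "vv t \<notin> fst p" using UVM by blast
      moreover have "xx t \<notin> fst p" using F1[OF h(1)] t(1) by blast
      ultimately have 1: "fst p \<inter> fst p' = {}" using t(2) by simp
      have "c0 t \<notin> snd ` M" using c0(2)[OF t(1)] C0_M by blast
      moreover have "snd p \<in> snd ` M" using h(1) by blast
      moreover have "snd p' = c0 t" using t(2) by simp
      ultimately have "snd p \<noteq> snd p'" by metis
      thus ?thesis unfolding P_def using 1 by blast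
    qed
    have AD: "P p p'" if h: "p \<in> M - R" "p' \<in> E" for p p'
    proof -
      have "fst p' \<subseteq> F" using Ev[OF h(2)] unfolding F_def .
      hence 1: "fst p \<inter> fst p' = {}" using F6[OF h(1)] by blast
      have "snd p' \<in> col ` (T \<union> A0)" using Ee[OF h(2)] by (rule conjunct1)
      hence "snd p \<noteq> snd p'" using F3[OF h(1)] by metis
      thus ?thesis unfolding P_def using 1 by blast
    qed
    have BD: "P p p'" if h: "p \<in> Sw" "p' \<in> E" for p p'
    proof -
      obtain t where t: "t \<in> T" "p = ({vv t, xx t}, c0 t)" using h unfolding Sw_def by blast
      have "fst p' \<subseteq> F" using Ev[OF h(2)] unfolding F_def .
      hence 1: "fst p \<inter> fst p' = {}" using F5[OF t(1)] t(2) by auto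
      have "col ` (T \<union> A0) \<subseteq> snd ` M" using TA col_M by (meson image_subsetI subsetD)
      moreover have "snd p' \<in> col ` (T \<union> A0)" using Ee[OF h(2)] by (rule conjunct1)
      ultimately have "snd p' \<in> snd ` M" by (rule subsetD)
      moreover have "c0 t \<notin> snd ` M" using c0(2)[OF t(1)] C0_M by blast
      moreover have "snd p = c0 t" using t(2) by simp
      ultimately have "snd p \<noteq> snd p'" by metis
      thus ?thesis unfolding P_def using 1 by blast
    qed
    have AA: "P p p'" if "p \<in> M - R" "p' \<in> M - R" "p \<noteq> p'" for p p'
      unfolding P_def using Mdisj' that by blast
    have BB: "P p p'" if h: "p \<in> Sw" "p' \<in> Sw" "p \<noteq> p'" for p p'
    proof -
      obtain t where t: "t \<in> T" "p = ({vv t, xx t}, c0 t)" using h unfolding Sw_def by blast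
      obtain s where s: "s \<in> T" "p' = ({vv s, xx s}, c0 s)" using h unfolding Sw_def by blast
      have ts: "t \<noteq> s"
      proof
        assume "t = s" thus False using t(2) s(2) h(3) by simp
      qed
      have tN: "t \<in> N" and sN: "s \<in> N" using t s T by blast+
      have "vv t \<noteq> vv s \<and> xx t \<noteq> xx s" using Ninj[OF tN sN ts] by blast
      moreover have "vv t \<in> U" "vv s \<in> U" "xx t \<in> VM" "xx s \<in> VM" using Nv Nx tN sN by blast+
      moreover have "c0 t \<noteq> c0 s" using c0(1) t(1) s(1) ts unfolding inj_on_def by blast
      ultimately show ?thesis unfolding P_def using t(2) s(2) UVM by auto
    qed
    have DD: "P p p'" if "p \<in> E" "p' \<in> E" "p \<noteq> p'" for p p'
      unfolding P_def using Ed that by blast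
    have "p \<in> M - R \<or> p \<in> Sw \<or> p \<in> E" "p' \<in> M - R \<or> p' \<in> Sw \<or> p' \<in> E"
      using pp unfolding M'_def by blast+
    hence "P p p'" using AA BB DD AB AD BD Psym pp(3) by metis
    thus "fst p \<inter> fst p' = {} \<and> snd p \<noteq> snd p'" unfolding P_def .
  qed
  have finS: "finite Sw" unfolding Sw_def using finT by simp
  have finMR: "finite (M - R)" using Mfin by simp
  have sSw: "snd p \<in> C0" if "p \<in> Sw" for p
  proof -
    note h = that
    obtain t where "t \<in> T" "p = ({vv t, xx t}, c0 t)" using h unfolding Sw_def by blast
    thus ?thesis using c0(2) by simp
  qed
  have d1: "(M - R) \<inter> Sw = {}"
  proof (rule ccontr)
    assume "(M - R) \<inter> Sw \<noteq> {}"
    then obtain p where p: "p \<in> M" "p \<in> Sw" by blast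
    hence "snd p \<in> C0" "snd p \<in> snd ` M" using sSw by auto
    thus False using C0_M by blast
  qed
  have d2: "((M - R) \<union> Sw) \<inter> E = {}"
  proof (rule ccontr)
    assume "((M - R) \<union> Sw) \<inter> E \<noteq> {}"
    then obtain p where p: "p \<in> (M - R) \<union> Sw" "p \<in> E" by blast
    have sc: "snd p \<in> col ` (T \<union> A0)" using Ee[OF p(2)] by (rule conjunct1)
    show False
    proof (cases "p \<in> Sw")
      case True
      hence "snd p \<in> C0" using sSw by blast
      moreover have "col ` (T \<union> A0) \<subseteq> snd ` M" using TA col_M by (meson image_subsetI subsetD)
      hence "snd p \<in> snd ` M" using sc by (rule subsetD)
      ultimately show False using C0_M by blast
    next
      case False
      hence "p \<in> M - R" using p by blast
      thus False using F3 sc by blast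
    qed
  qed
  have "card M' = card (M - R) + card Sw + card E"
    unfolding M'_def using card_Un_disjoint[OF finMR finS d1] card_Un_disjoint[OF _ Efin d2] finMR finS by simp
  moreover have "card (M - R) = card M - card R" using card_Diff_subset[OF finite_subset[OF RM Mfin] RM] .
  moreover have "card R \<le> card M" using card_mono[OF Mfin RM] .
  ultimately have "card M' > card M" using cardR cardS Ec by linarith
  moreover have "card M' \<le> card M" using RMmax[OF rm] .
  ultimately show False by linarith
qed


lemma card2_le: "card {x, y} \<le> 2" by (auto simp: card_insert_if)
lemma card3_le: "card {x, y, z} \<le> 3" by (auto simp: card_insert_if)
lemma ex2: "has_edge K c x y \<Longrightarrow> \<exists>u v. {x,y} = {u,v} \<and> has_edge K c u v" by blast

lemma col_ne: "b \<in> N \<Longrightarrow> e \<in> N \<Longrightarrow> b \<noteq> e \<Longrightarrow> col b \<noteq> col e"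
  using Ninj2 by blast

lemma yy_ne: "b \<in> N \<Longrightarrow> e \<in> N \<Longrightarrow> b \<noteq> e \<Longrightarrow> yy b \<noteq> yy e"
  using Ninj2 by auto

lemma vv_ne: "b \<in> N \<Longrightarrow> e \<in> N \<Longrightarrow> b \<noteq> e \<Longrightarrow> vv b \<noteq> vv e"
  using Ninj by auto

lemma xy_ne: "a \<in> N \<Longrightarrow> xx a \<noteq> yy a"
  using blk[THEN conjunct2, THEN conjunct2, THEN conjunct1] .

lemma UVM': "x \<in> U \<Longrightarrow> y \<in> VM \<Longrightarrow> x \<noteq> y" using UVM by auto

lemma ex_UU:
  assumes eN: "e \<in> N" and u: "u \<in> U" "u' \<in> U" "u \<noteq> vv e" "u' \<noteq> vv e"
    and h: "has_edge K (col e) u u'"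
  shows False
proof (rule augment[of "{e}" "{}" "{({u,u'}, col e)}"])
  show "{e} \<subseteq> N" using eN by simp
  show "card {e} \<le> 7" by simp
  show "{} \<subseteq> N" by simp
  show "{e} \<inter> {} = {}" by simp
  show "finite {({u,u'}, col e)}" by simp
next
  fix r assume "r \<in> {({u, u'}, col e)}"
  thus "snd r \<in> col ` ({e} \<union> {}) \<and> (\<exists>x y. fst r = {x, y} \<and> has_edge K (snd r) x y)"
    using h by auto
next
  fix r r' assume "r \<in> {({u, u'}, col e)}" "r' \<in> {({u, u'}, col e)}" "r \<noteq> r'"
  thus "fst r \<inter> fst r' = {} \<and> snd r \<noteq> snd r'" by simp
next
  fix r assume "r \<in> {({u, u'}, col e)}"
  thus "fst r \<subseteq> U - vv ` {e} \<union> yy ` {e} \<union> xx ` {} \<union> yy ` {}" using u by auto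
next
  show "card {} < card {({u, u'}, col e)}" by simp
qed

lemma ex_yU:
  assumes eN: "e \<in> N" and aN: "a \<in> N" and u: "u \<in> U" "u \<noteq> vv a" "u \<noteq> vv e"
    and h: "has_edge K (col e) (yy a) u"
  shows False
proof (rule augment[of "{e,a}" "{}" "{({yy a,u}, col e)}"])
  show "{e,a} \<subseteq> N" using eN aN by simp
  show "card {e,a} \<le> 7" using card2_le[of e a] by linarith
  show "{} \<subseteq> N" by simp
  show "{e,a} \<inter> {} = {}" by simp
  show "finite {({yy a,u}, col e)}" by simp
next
  fix r assume "r \<in> {({yy a,u}, col e)}"
  thus "snd r \<in> col ` ({e,a} \<union> {}) \<and> (\<exists>x y. fst r = {x, y} \<and> has_edge K (snd r) x y)"
    using h by auto
next
  fix r r' assume "r \<in> {({yy a,u}, col e)}" "r' \<in> {({yy a,u}, col e)}" "r \<noteq> r'"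
  thus "fst r \<inter> fst r' = {} \<and> snd r \<noteq> snd r'" by simp
next
  fix r assume "r \<in> {({yy a,u}, col e)}"
  thus "fst r \<subseteq> U - vv ` {e,a} \<union> yy ` {e,a} \<union> xx ` {} \<union> yy ` {}" using u by auto
next
  show "card {} < card {({yy a,u}, col e)}" by simp
qed

lemma ex_yy:
  assumes eN: "e \<in> N" and aN: "a \<in> N" and fN: "f \<in> N" and af: "a \<noteq> f"
    and h: "has_edge K (col e) (yy a) (yy f)"
  shows False
proof (rule augment[of "{e,a,f}" "{}" "{({yy a,yy f}, col e)}"])
  show "{e,a,f} \<subseteq> N" using eN aN fN by simp
  show "card {e,a,f} \<le> 7" using card3_le[of e a f] by linarith
  show "{} \<subseteq> N" by simp
  show "{e,a,f} \<inter> {} = {}" by simp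
  show "finite {({yy a,yy f}, col e)}" by simp
next
  fix r assume "r \<in> {({yy a,yy f}, col e)}"
  thus "snd r \<in> col ` ({e,a,f} \<union> {}) \<and> (\<exists>x y. fst r = {x, y} \<and> has_edge K (snd r) x y)"
    using h by auto
next
  fix r r' assume "r \<in> {({yy a,yy f}, col e)}" "r' \<in> {({yy a,yy f}, col e)}" "r \<noteq> r'"
  thus "fst r \<inter> fst r' = {} \<and> snd r \<noteq> snd r'" by simp
next
  fix r assume "r \<in> {({yy a,yy f}, col e)}"
  thus "fst r \<subseteq> U - vv ` {e,a,f} \<union> yy ` {e,a,f} \<union> xx ` {} \<union> yy ` {}" by auto
next
  show "card {} < card {({yy a,yy f}, col e)}" by simp
qed

lemma ex_x:
  assumes eN: "e \<in> N" and aN: "a \<in> N" and bN: "b \<in> N" and be: "b \<noteq> e"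
    and hb: "has_edge K (col b) (vv a) (yy a)"
    and T: "T = {e,b} - {a} \<or> T = {e,b,f} - {a}" and fN: "f \<in> N"
    and zz: "zz \<in> (U - vv ` T) \<union> yy ` T" "zz \<noteq> vv a" "zz \<noteq> yy a"
    and hw: "has_edge K (col e) (xx a) zz"
  shows False
proof -
  define p where "p = ({vv a, yy a}, col b)"
  define q where "q = ({xx a, zz}, col e)"
  have cbe: "col b \<noteq> col e" using col_ne[OF bN eN be] .
  have va: "vv a \<in> U" using Nv[OF aN] .
  have xa: "xx a \<in> VM" using Nx[OF aN] .
  have ya: "yy a \<in> VM" using Ny[OF aN] .
  have xy: "xx a \<noteq> yy a" using xy_ne[OF aN] .
  have TN: "T \<subseteq> N" using eN bN fN T by blast
  have cT: "card T \<le> 7"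
  proof -
    have "card T \<le> card {e,b,f}" using T by (intro card_mono) auto
    thus ?thesis using card3_le[of e b f] by linarith
  qed
  have aT: "a \<notin> T" using T by blast
  have vT: "vv a \<notin> vv ` T" using inj_on_image_mem_iff[OF inj_vv aN TN] aT by blast
  have yVM: "yy ` T \<subseteq> VM" using TN Ny by blast
  have zva: "vv a \<noteq> zz" using zz(2) by metis
  have zxa: "xx a \<noteq> zz"
  proof
    assume "xx a = zz"
    hence "xx a \<in> U \<or> xx a \<in> yy ` T" using zz(1) by blast
    moreover have "xx a \<notin> U" using xa UVM by blast
    moreover have "xx a \<notin> yy ` T" using xx_notin_F[OF aN] TN by blast
    ultimately show False by blast
  qed
  have pq1: "fst p \<inter> fst q = {}"
    unfolding p_def q_def using zva zz(3) UVM'[OF va xa] xy zxa by auto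
  have pq2: "snd p \<noteq> snd q" unfolding p_def q_def using cbe by simp
  have pqne: "p \<noteq> q" using pq2 by metis
  have colT: "col b \<in> col ` (T \<union> {a})" "col e \<in> col ` (T \<union> {a})" using T by blast+
  show False
  proof (rule augment[of T "{a}" "{p,q}"])
    show "T \<subseteq> N" by fact
    show "card T \<le> 7" by fact
    show "{a} \<subseteq> N" using aN by simp
    show "T \<inter> {a} = {}" using aT by simp
    show "finite {p,q}" by simp
  next
    fix r assume r: "r \<in> {p,q}"
    have "snd p \<in> col ` (T \<union> {a}) \<and> (\<exists>x y. fst p = {x, y} \<and> has_edge K (snd p) x y)"
      unfolding p_def using colT(1) ex2[OF hb] by simp
    moreover have "snd q \<in> col ` (T \<union> {a}) \<and> (\<exists>x y. fst q = {x, y} \<and> has_edge K (snd q) x y)"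
      unfolding q_def using colT(2) ex2[OF hw] by simp
    ultimately show "snd r \<in> col ` (T \<union> {a}) \<and> (\<exists>x y. fst r = {x, y} \<and> has_edge K (snd r) x y)"
      using r by blast
  next
    fix r r' assume "r \<in> {p,q}" "r' \<in> {p,q}" "r \<noteq> r'"
    hence "(r = p \<and> r' = q) \<or> (r = q \<and> r' = p)" by blast
    thus "fst r \<inter> fst r' = {} \<and> snd r \<noteq> snd r'" using pq1 pq2 by (metis Int_commute)
  next
    fix r assume r: "r \<in> {p,q}"
    have "vv a \<in> U - vv ` T" using va vT by blast
    hence "fst p \<subseteq> U - vv ` T \<union> yy ` T \<union> xx ` {a} \<union> yy ` {a}"
      unfolding p_def by auto
    moreover have "fst q \<subseteq> U - vv ` T \<union> yy ` T \<union> xx ` {a} \<union> yy ` {a}"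
      unfolding q_def using zz(1) by auto
    ultimately show "fst r \<subseteq> U - vv ` T \<union> yy ` T \<union> xx ` {a} \<union> yy ` {a}"
      using r by blast
  next
    show "card {a} < card {p,q}" using pqne by simp
  qed
qed


definition "D a = {c \<in> col ` N. has_edge K c (vv a) (yy a)}"

lemma VMfin: "finite VM" using VM_V finV finite_subset by blast

lemma Dfin: "finite (D a)" unfolding D_def using Nfin by simp

context fixes e assumes eN: "e \<in> N"
begin

definition "cc = col e"
definition "Qof p = (THE Q. Q \<in> K cc \<and> p \<in> Q)"
definition "PP = \<Union>(K cc) \<inter> ((U - {vv e}) \<union> yy ` N)"
definition "P1 = {p \<in> PP. \<exists>a\<in>N. p = yy a \<and> vv a \<in> Qof p}"
definition "P2 = {p \<in> PP. \<exists>a\<in>N. p = vv a \<and> yy a \<in> Qof p}"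
definition "NP = PP - P1 - P2"
definition "P3 = {p \<in> NP. vv e \<in> Qof p}"
definition "Zpp = VM - yy ` N - xx ` N"
definition "P4 = {p \<in> NP - P3. \<exists>z\<in>Zpp. z \<in> Qof p}"
definition "P5 = NP - P3 - P4"
definition "dset = {a \<in> N. has_edge K cc (vv a) (yy a)}"
definition "exset = {a \<in> dset. card (D a - {cc}) \<le> 1}"

lemma cc_eq: "cc = col e" by (simp add: cc_def)

lemma Qof_eq: "Q \<in> K cc \<Longrightarrow> p \<in> Q \<Longrightarrow> Qof p = Q"
  unfolding Qof_def
proof (rule the_equality)
  assume "Q \<in> K cc" "p \<in> Q" thus "Q \<in> K cc \<and> p \<in> Q" by simp
next
  fix Q' assume "Q \<in> K cc" "p \<in> Q" "Q' \<in> K cc \<and> p \<in> Q'"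
  thus "Q' = Q" using cliq_disj by blast
qed

lemma Qof_in: "p \<in> \<Union>(K cc) \<Longrightarrow> Qof p \<in> K cc \<and> p \<in> Qof p"
proof -
  assume "p \<in> \<Union>(K cc)"
  then obtain Q where "Q \<in> K cc" "p \<in> Q" by blast
  thus ?thesis using Qof_eq by simp
qed

lemma edgeQ: "Q \<in> K cc \<Longrightarrow> p \<in> Q \<Longrightarrow> q \<in> Q \<Longrightarrow> p \<noteq> q \<Longrightarrow> has_edge K cc p q"
  unfolding has_edge_def by blast

lemma PP_S: "p \<in> PP \<Longrightarrow> p \<in> \<Union>(K cc)" unfolding PP_def by blast

lemma uniq: assumes p: "p \<in> NP" and p': "p' \<in> PP" and pq: "p' \<in> Qof p" shows "p' = p"
proof (rule ccontr)
  assume ne: "p' \<noteq> p"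
  have pP: "p \<in> PP" "p \<notin> P1" "p \<notin> P2" using p unfolding NP_def by auto
  have pS: "p \<in> \<Union>(K cc)" using PP_S pP(1) .
  have Q: "Qof p \<in> K cc" "p \<in> Qof p" using Qof_in[OF pS] by auto
  have h: "has_edge K cc p p'" using edgeQ[OF Q pq] ne by metis
  have cc: "cc = col e" by (simp add: cc_def)
  have pc: "p \<in> U - {vv e} \<or> p \<in> yy ` N" using pP unfolding PP_def by blast
  have pc': "p' \<in> U - {vv e} \<or> p' \<in> yy ` N" using p' unfolding PP_def by blast
  show False
  proof (cases "p \<in> yy ` N")
    case True then obtain a where a: "a \<in> N" "p = yy a" by blast
    show False
    proof (cases "p' \<in> yy ` N")
      case True then obtain f where f: "f \<in> N" "p' = yy f" by blast
      have "a \<noteq> f" using a f ne by metis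
      moreover have "has_edge K (col e) (yy a) (yy f)" using h a f cc by simp
      ultimately show False using ex_yy[OF eN a(1) f(1)] by simp
    next
      case False hence u: "p' \<in> U" "p' \<noteq> vv e" using pc' by auto
      show False
      proof (cases "p' = vv a")
        case True
        have "\<exists>a\<in>N. p = yy a \<and> vv a \<in> Qof p" using a pq True by auto
        hence "p \<in> P1" using pP(1) unfolding P1_def by simp
        thus False using pP by simp
      next
        case False
        have "has_edge K (col e) (yy a) p'" using h a cc by simp
        thus False using ex_yU[OF eN a(1) u(1) False u(2)] by simp
      qed
    qed
  next
    case False hence u: "p \<in> U" "p \<noteq> vv e" using pc by auto
    show False
    proof (cases "p' \<in> yy ` N")
      case True then obtain a where a: "a \<in> N" "p' = yy a" by blast
      show False
      proof (cases "p = vv a")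
        case True
        have "\<exists>a\<in>N. p = vv a \<and> yy a \<in> Qof p" using a pq True by auto
        hence "p \<in> P2" using pP(1) unfolding P2_def by simp
        thus False using pP by simp
      next
        case False
        have "has_edge K cc (yy a) p" using h a has_edge_sym by metis
        thus False using ex_yU[OF eN a(1) u(1) False u(2)] cc by simp
      qed
    next
      case False hence "p' \<in> U" "p' \<noteq> vv e" using pc' by auto
      thus False using ex_UU[OF eN u(1) _ u(2)] h cc by simp
    qed
  qed
qed

lemma sameQ: assumes "p \<in> NP" "p' \<in> NP" "b \<in> Qof p" "b \<in> Qof p'" shows "p = p'"
proof -
  have pP: "p \<in> PP" "p' \<in> PP" using assms unfolding NP_def by auto
  have Q: "Qof p \<in> K cc" "Qof p' \<in> K cc" "p' \<in> Qof p'" using Qof_in PP_S pP by blast+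
  have "Qof p = Qof p'"
  proof (rule ccontr)
    assume "Qof p \<noteq> Qof p'"
    hence "Qof p \<inter> Qof p' = {}" using cliq_disj Q by blast
    thus False using assms(3,4) by blast
  qed
  hence "p' \<in> Qof p" using Q(3) by simp
  thus ?thesis using uniq[OF assms(1) pP(2)] by simp
qed

lemma dset_fin: "finite dset" unfolding dset_def using Nfin by simp

lemma card_P1: "card P1 \<le> card dset"
proof (rule card_le_rel[where R = "\<lambda>p a. p = yy a"])
  show "finite dset" by (rule dset_fin)
next
  fix p assume "p \<in> P1"
  then obtain a where a: "a \<in> N" "p = yy a" "vv a \<in> Qof p" "p \<in> PP" unfolding P1_def by blast
  have pS: "p \<in> \<Union>(K cc)" using PP_S a(4) .
  have "vv a \<noteq> yy a" using UVM'[OF Nv[OF a(1)] Ny[OF a(1)]] .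
  hence "has_edge K cc (vv a) (yy a)" using edgeQ[OF Qof_in[THEN conjunct1, OF pS] a(3)] Qof_in[OF pS] a(2) by simp
  hence "a \<in> dset" unfolding dset_def using a(1) by simp
  thus "\<exists>b\<in>dset. p = yy b" using a(2) by blast
next
  fix p p' b assume "p = yy b" "p' = yy b" thus "p = p'" by simp
qed

lemma card_P2: "card P2 \<le> card dset"
proof (rule card_le_rel[where R = "\<lambda>p a. p = vv a"])
  show "finite dset" by (rule dset_fin)
next
  fix p assume "p \<in> P2"
  then obtain a where a: "a \<in> N" "p = vv a" "yy a \<in> Qof p" "p \<in> PP" unfolding P2_def by blast
  have pS: "p \<in> \<Union>(K cc)" using PP_S a(4) .
  have "vv a \<noteq> yy a" using UVM'[OF Nv[OF a(1)] Ny[OF a(1)]] .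
  hence "has_edge K cc (vv a) (yy a)" using edgeQ[OF Qof_in[THEN conjunct1, OF pS] _ a(3)] Qof_in[OF pS] a(2) by simp
  hence "a \<in> dset" unfolding dset_def using a(1) by simp
  thus "\<exists>b\<in>dset. p = vv b" using a(2) by blast
next
  fix p p' b assume "p = vv b" "p' = vv b" thus "p = p'" by simp
qed

lemma card_P3: "card P3 \<le> 1"
proof -
  have "card P3 \<le> card {vv e}"
  proof (rule card_le_rel[where R = "\<lambda>p b. b \<in> Qof p"])
    show "finite {vv e}" by simp
  next
    fix p assume "p \<in> P3" thus "\<exists>b\<in>{vv e}. b \<in> Qof p" unfolding P3_def by blast
  next
    fix p p' b assume "p \<in> P3" "p' \<in> P3" "b \<in> Qof p" "b \<in> Qof p'"
    thus "p = p'" using sameQ unfolding P3_def by blast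
  qed
  thus ?thesis by simp
qed

lemma card_P4: "card P4 \<le> card Zpp"
proof (rule card_le_rel[where R = "\<lambda>p b. b \<in> Qof p"])
  show "finite Zpp" unfolding Zpp_def using VMfin by simp
next
  fix p assume "p \<in> P4" thus "\<exists>b\<in>Zpp. b \<in> Qof p" unfolding P4_def by blast
next
  fix p p' b assume "p \<in> P4" "p' \<in> P4" "b \<in> Qof p" "b \<in> Qof p'"
  thus "p = p'" using sameQ unfolding P4_def by blast
qed

lemma P5_main:
  assumes p5: "p \<in> P5"
  shows "\<exists>a\<in>(N - dset) \<union> exset. xx a \<in> Qof p"
proof -
  have pNP: "p \<in> NP" and n3: "p \<notin> P3" and n4: "p \<notin> P4" using p5 unfolding P5_def by auto
  have pP: "p \<in> PP" "p \<notin> P1" "p \<notin> P2" using pNP unfolding NP_def by auto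
  have pS: "p \<in> \<Union>(K cc)" using PP_S pP(1) .
  have Q: "Qof p \<in> K cc" "p \<in> Qof p" using Qof_in[OF pS] by auto
  have cQ: "2 \<le> card (Qof p)" using cliq Q(1) by blast
  have "\<exists>q\<in>Qof p. q \<noteq> p"
  proof (rule ccontr)
    assume "\<not> (\<exists>q\<in>Qof p. q \<noteq> p)"
    hence "Qof p \<subseteq> {p}" by blast
    hence "card (Qof p) \<le> card {p}" by (intro card_mono) auto
    thus False using cQ by simp
  qed
  then obtain q where q: "q \<in> Qof p" "q \<noteq> p" by blast
  have qV: "q \<in> V" using cliq Q(1) q(1) by blast
  have qS: "q \<in> \<Union>(K cc)" using Q(1) q(1) by blast
  have qe: "q \<noteq> vv e"
  proof
    assume "q = vv e"
    hence "vv e \<in> Qof p" using q(1) by simp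
    hence "p \<in> P3" using pNP unfolding P3_def by simp
    thus False using n3 by simp
  qed
  have "q \<notin> PP"
  proof
    assume "q \<in> PP" thus False using uniq[OF pNP _ q(1)] q(2) by simp
  qed
  hence qn: "q \<notin> U - {vv e}" "q \<notin> yy ` N" using qS unfolding PP_def by blast+
  hence "q \<notin> U" using qe by blast
  hence qVM: "q \<in> VM" using qV unfolding U_def by blast
  have "q \<notin> Zpp"
  proof
    assume "q \<in> Zpp"
    hence "p \<in> P4" using pNP n3 q(1) unfolding P4_def by blast
    thus False using n4 by simp
  qed
  hence "q \<in> xx ` N" using qVM qn(2) unfolding Zpp_def by blast
  then obtain a where a: "a \<in> N" "q = xx a" by blast
  have xQ: "xx a \<in> Qof p" using q(1) a(2) by simp
  show ?thesis
  proof (cases "a \<in> dset")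
    case False thus ?thesis using a(1) xQ by blast
  next
    case True
    have hd: "has_edge K cc (vv a) (yy a)" using True unfolding dset_def by simp
    then obtain Q' where Q': "Q' \<in> K cc" "vv a \<in> Q'" "yy a \<in> Q'" unfolding has_edge_def by blast
    have pva: "p \<noteq> vv a"
    proof
      assume pv: "p = vv a"
      hence "Qof p = Q'" using Qof_eq[OF Q'(1)] Q'(2) by simp
      hence "\<exists>a\<in>N. p = vv a \<and> yy a \<in> Qof p" using a(1) pv Q'(3) by auto
      hence "p \<in> P2" using pP(1) unfolding P2_def by simp
      thus False using pP(3) by simp
    qed
    have pya: "p \<noteq> yy a"
    proof
      assume py: "p = yy a"
      hence "Qof p = Q'" using Qof_eq[OF Q'(1)] Q'(3) by simp
      hence "\<exists>a\<in>N. p = yy a \<and> vv a \<in> Qof p" using a(1) py Q'(2) by auto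
      hence "p \<in> P1" using pP(1) unfolding P1_def by simp
      thus False using pP(2) by simp
    qed
    have hx: "has_edge K (col e) (xx a) p" using edgeQ[OF Q(1) xQ Q(2)] q(2) a(2) unfolding cc_def by simp
    have "card (D a - {cc}) \<le> 1"
    proof (rule ccontr)
      assume nc: "\<not> card (D a - {cc}) \<le> 1"
      have "finite (D a - {cc})" using Dfin by simp
      hence "\<not> (\<forall>a1 \<in> D a - {cc}. \<forall>a2 \<in> D a - {cc}. a1 = a2)"
        using card_le_Suc0_iff_eq[of "D a - {cc}"] nc by simp
      then obtain c1 c2 where c12: "c1 \<in> D a - {cc}" "c2 \<in> D a - {cc}" "c1 \<noteq> c2" by blast
      obtain b1 where b1: "b1 \<in> N" "c1 = col b1" using c12(1) unfolding D_def by blast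
      obtain b2 where b2: "b2 \<in> N" "c2 = col b2" using c12(2) unfolding D_def by blast
      have hb1: "has_edge K (col b1) (vv a) (yy a)" using c12(1) b1(2) unfolding D_def by simp
      have hb2: "has_edge K (col b2) (vv a) (yy a)" using c12(2) b2(2) unfolding D_def by simp
      have b1e: "b1 \<noteq> e" using c12(1) b1(2) unfolding cc_def by auto
      have b2e: "b2 \<noteq> e" using c12(2) b2(2) unfolding cc_def by auto
      have b12: "b1 \<noteq> b2" using c12(3) b1(2) b2(2) by auto
      show False
      proof (cases "p \<in> yy ` N")
        case True
        then obtain f where f: "f \<in> N" "p = yy f" by blast
        have fa: "f \<noteq> a" using pya f(2) by auto
        have "p \<in> yy ` ({e,b1,f} - {a})" using f fa by blast
        hence pT: "p \<in> (U - vv ` ({e,b1,f} - {a})) \<union> yy ` ({e,b1,f} - {a})" by blast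
        show False
          by (rule ex_x[OF eN a(1) b1(1) b1e hb1 _ f(1) pT pva pya hx]) simp
      next
        case False
        hence u: "p \<in> U" "p \<noteq> vv e" using pP(1) unfolding PP_def by blast+
        have "vv b1 \<noteq> vv b2" using vv_ne[OF b1(1) b2(1) b12] .
        then obtain b where b: "b \<in> N" "b \<noteq> e" "has_edge K (col b) (vv a) (yy a)" "p \<noteq> vv b"
          using b1 b2 hb1 hb2 b1e b2e by metis
        have "p \<notin> vv ` ({e,b} - {a})" using u(2) b(4) by auto
        hence pT: "p \<in> (U - vv ` ({e,b} - {a})) \<union> yy ` ({e,b} - {a})" using u(1) by blast
        show False
          by (rule ex_x[OF eN a(1) b(1) b(2) b(3) _ eN pT pva pya hx]) simp
      qed
    qed
    hence "a \<in> exset" using True unfolding exset_def by simp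
    thus ?thesis using xQ by blast
  qed
qed

lemma card_P5: "card P5 \<le> card ((N - dset) \<union> exset)"
proof (rule card_le_rel[where R = "\<lambda>p a. xx a \<in> Qof p"])
  show "finite ((N - dset) \<union> exset)" unfolding exset_def dset_def using Nfin by simp
next
  fix p assume "p \<in> P5" thus "\<exists>b\<in>(N - dset) \<union> exset. xx b \<in> Qof p" by (rule P5_main)
next
  fix p p' b assume "p \<in> P5" "p' \<in> P5" "xx b \<in> Qof p" "xx b \<in> Qof p'"
  thus "p = p'" using sameQ unfolding P5_def by blast
qed

lemma col_bound: "card (\<Union>(K cc)) \<le> 2 * card (VM - yy ` N) + card dset + card exset + 2"
proof -
  have Sfin: "finite (\<Union>(K cc))"
  proof -
    have "\<Union>(K cc) \<subseteq> V" using cliq by blast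
    thus ?thesis using finV finite_subset by blast
  qed
  have PPfin: "finite PP" using Sfin unfolding PP_def by simp
  have s1: "card (\<Union>(K cc)) \<le> 1 + card PP + card (VM - yy ` N)"
  proof -
    have sub: "\<Union>(K cc) \<subseteq> {vv e} \<union> PP \<union> (VM - yy ` N)"
    proof
      fix z assume z: "z \<in> \<Union>(K cc)"
      hence "z \<in> V" using cliq by blast
      hence "z \<in> U \<or> z \<in> VM" unfolding U_def by blast
      thus "z \<in> {vv e} \<union> PP \<union> (VM - yy ` N)" using z unfolding PP_def by blast
    qed
    have "card (\<Union>(K cc)) \<le> card ({vv e} \<union> PP \<union> (VM - yy ` N))"
      using sub PPfin VMfin by (intro card_mono) auto
    also have "\<dots> \<le> card ({vv e} \<union> PP) + card (VM - yy ` N)" by (rule card_Un_le)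
    also have "card ({vv e} \<union> PP) \<le> card {vv e} + card PP" by (rule card_Un_le)
    finally show ?thesis by simp
  qed
  have s2: "card PP \<le> card P1 + card P2 + card P3 + card P4 + card P5"
  proof -
    have "PP \<subseteq> P1 \<union> P2 \<union> P3 \<union> P4 \<union> P5" unfolding P5_def P4_def P3_def NP_def by blast
    moreover have "P1 \<union> P2 \<union> P3 \<union> P4 \<union> P5 \<subseteq> PP"
      unfolding P1_def P2_def P3_def P4_def P5_def NP_def by blast
    ultimately have "card PP \<le> card (P1 \<union> P2 \<union> P3 \<union> P4 \<union> P5)"
      using PPfin finite_subset by (intro card_mono) auto
    also have "\<dots> \<le> card (P1 \<union> P2 \<union> P3 \<union> P4) + card P5" by (rule card_Un_le)
    also have "card (P1 \<union> P2 \<union> P3 \<union> P4) \<le> card (P1 \<union> P2 \<union> P3) + card P4" by (rule card_Un_le)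
    also have "card (P1 \<union> P2 \<union> P3) \<le> card (P1 \<union> P2) + card P3" by (rule card_Un_le)
    also have "card (P1 \<union> P2) \<le> card P1 + card P2" by (rule card_Un_le)
    finally show ?thesis by simp
  qed
  have s3: "card Zpp + card N = card (VM - yy ` N)"
  proof -
    have sub: "xx ` N \<subseteq> VM - yy ` N"
    proof
      fix z assume "z \<in> xx ` N"
      then obtain t where t: "t \<in> N" "z = xx t" by blast
      have "xx t \<notin> yy ` N"
      proof
        assume "xx t \<in> yy ` N"
        then obtain s where "s \<in> N" "xx t = yy s" by blast
        thus False using xx_notin_F[OF t(1)] by metis
      qed
      thus "z \<in> VM - yy ` N" using Nx[OF t(1)] t(2) by simp
    qed
    have "card (xx ` N) = card N" using card_image[OF inj_xx] .
    moreover have "card Zpp = card (VM - yy ` N) - card (xx ` N)"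
      unfolding Zpp_def using card_Diff_subset[OF _ sub] Nfin by simp
    moreover have "card (xx ` N) \<le> card (VM - yy ` N)" using sub VMfin by (intro card_mono) auto
    ultimately show ?thesis by linarith
  qed
  have s4: "card ((N - dset) \<union> exset) \<le> card N - card dset + card exset"
  proof -
    have "dset \<subseteq> N" unfolding dset_def by blast
    hence "card (N - dset) = card N - card dset" using card_Diff_subset dset_fin by blast
    thus ?thesis using card_Un_le[of "N - dset" exset] by simp
  qed
  have s5: "card dset \<le> card N" using Nfin unfolding dset_def by (intro card_mono) auto
  show ?thesis using s1 s2 s3 s4 s5 card_P1 card_P2 card_P3 card_P4 card_P5 by linarith
qed

end


lemma card_col_D: "a \<in> N \<Longrightarrow> card {e\<in>N. has_edge K (col e) (vv a) (yy a)} = card (D a)"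
proof -
  have "D a = col ` {e\<in>N. has_edge K (col e) (vv a) (yy a)}"
  proof (rule set_eqI)
    fix c show "c \<in> D a \<longleftrightarrow> c \<in> col ` {e\<in>N. has_edge K (col e) (vv a) (yy a)}"
    proof
      assume "c \<in> D a"
      then obtain e where e: "e \<in> N" "c = col e" "has_edge K c (vv a) (yy a)" unfolding D_def by blast
      show "c \<in> col ` {e\<in>N. has_edge K (col e) (vv a) (yy a)}"
        by (rule image_eqI[of c col e]) (use e in simp_all)
    next
      assume "c \<in> col ` {e\<in>N. has_edge K (col e) (vv a) (yy a)}"
      then obtain e where e: "e \<in> N" "has_edge K (col e) (vv a) (yy a)" "c = col e" by blast
      thus "c \<in> D a" unfolding D_def by simp
    qed
  qed
  moreover have "inj_on col {e\<in>N. has_edge K (col e) (vv a) (yy a)}"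
    using inj_col by (rule inj_on_subset) auto
  ultimately show ?thesis using card_image by metis
qed

lemma D_le: "card (D a) \<le> card N"
proof -
  have "card (D a) \<le> card (col ` N)" unfolding D_def using Nfin by (intro card_mono) auto
  also have "\<dots> \<le> card N" by (rule card_image_le[OF Nfin])
  finally show ?thesis .
qed

lemma dsum: "(\<Sum>e\<in>N. card (dset e)) = (\<Sum>a\<in>N. card (D a))"
proof -
  have "(\<Sum>e\<in>N. card (dset e)) = (\<Sum>e\<in>N. card {a\<in>N. has_edge K (col e) (vv a) (yy a)})"
    by (rule sum.cong) (auto simp: dset_def cc_def)
  also have "\<dots> = (\<Sum>a\<in>N. card {e\<in>N. has_edge K (col e) (vv a) (yy a)})"
    by (rule sum_swap_card[OF Nfin Nfin])
  also have "\<dots> = (\<Sum>a\<in>N. card (D a))" by (rule sum.cong) (auto simp: card_col_D)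
  finally show ?thesis .
qed

lemma exsum: "(\<Sum>e\<in>N. card (exset e)) \<le> 2 * card N"
proof -
  have "(\<Sum>e\<in>N. card (exset e)) = (\<Sum>e\<in>N. card {a\<in>N. has_edge K (col e) (vv a) (yy a) \<and> card (D a - {col e}) \<le> 1})"
    by (rule sum.cong) (auto simp: exset_def dset_def cc_def)
  also have "\<dots> = (\<Sum>a\<in>N. card {e\<in>N. has_edge K (col e) (vv a) (yy a) \<and> card (D a - {col e}) \<le> 1})"
    by (rule sum_swap_card[OF Nfin Nfin])
  also have "\<dots> \<le> (\<Sum>a\<in>N. 2)"
  proof (rule sum_mono)
    fix a assume aN: "a \<in> N"
    define Ea where "Ea = {e\<in>N. has_edge K (col e) (vv a) (yy a) \<and> card (D a - {col e}) \<le> 1}"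
    show "card Ea \<le> 2"
    proof (cases "Ea = {}")
      case True thus ?thesis by simp
    next
      case False
      then obtain e0 where e0: "e0 \<in> N" "has_edge K (col e0) (vv a) (yy a)" "card (D a - {col e0}) \<le> 1"
        unfolding Ea_def by blast
      have "col e0 \<in> D a" unfolding D_def using e0 by simp
      hence "card (D a) \<le> 2" using e0(3) card_Diff_singleton[of "col e0" "D a"] by linarith
      moreover have "card Ea \<le> card {e\<in>N. has_edge K (col e) (vv a) (yy a)}"
        unfolding Ea_def using Nfin by (intro card_mono) auto
      ultimately show ?thesis using card_col_D[OF aN] by linarith
    qed
  qed
  also have "\<dots> = 2 * card N" by simp
  finally show ?thesis .
qed


lemma MN_eq: "M_N M N = (\<lambda>f. me (xx f)) ` N"
proof (rule set_eqI)
  fix p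
  show "p \<in> M_N M N \<longleftrightarrow> p \<in> (\<lambda>f. me (xx f)) ` N"
  proof
    assume pMN: "p \<in> M_N M N"
    obtain e c where ec: "p = (e,c)" by (cases p)
    have "(e,c) \<in> M \<and> (\<exists>f\<in>N. f \<inter> e \<noteq> {})" using pMN unfolding M_N_def ec by simp
    then obtain f where p: "p \<in> M" "f \<in> N" "f \<inter> fst p \<noteq> {}" using ec by auto
    then obtain z where z: "z \<in> f" "z \<in> fst p" by blast
    have "z \<in> VM" using Mfst_VM[OF p(1)] z(2) by blast
    moreover have "vv f \<in> U" using Nv[OF p(2)] .
    ultimately have zv: "z \<noteq> vv f" using UVM' by metis
    have fe: "f = {vv f, xx f}" using Nprop[OF p(2)] by (rule conjunct1)
    have "z = vv f \<or> z = xx f" using in2[OF fe z(1)] .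
    hence zx: "z = xx f" using zv by simp
    have "me (xx f) = p" using me_eq[OF p(1)] z(2) unfolding zx .
    thus "p \<in> (\<lambda>f. me (xx f)) ` N" using p(2) by (intro image_eqI[of p _ f]) simp_all
  next
    assume "p \<in> (\<lambda>f. me (xx f)) ` N"
    then obtain f where f: "f \<in> N" "p = me (xx f)" by blast
    have pM: "p \<in> M" using blk[OF f(1)] f(2) by simp
    have "xx f \<in> fst p" using me[OF Nx[OF f(1)]] f(2) by simp
    moreover have "xx f \<in> f" using Nmem[OF f(1)] by simp
    ultimately have "f \<inter> fst p \<noteq> {}" by blast
    hence "p \<in> M \<and> (\<exists>f\<in>N. f \<inter> fst p \<noteq> {})" using pM f(1) by blast
    thus "p \<in> M_N M N" unfolding M_N_def by (cases p) simp
  qed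
qed

lemma CN_eq: "C_N M N = col ` N"
  unfolding C_N_def MN_eq col_def by (simp add: image_image)

lemma CN_card: "card (C_N M N) = card N"
  unfolding CN_eq using card_image[OF inj_col] .

lemma Nalpha_eq: "N_alpha \<alpha> K M N = {a \<in> N. real (card (D a)) \<le> \<alpha> * real (card N)}"
proof (rule set_eqI)
  fix f
  show "f \<in> N_alpha \<alpha> K M N \<longleftrightarrow> f \<in> {a \<in> N. real (card (D a)) \<le> \<alpha> * real (card N)}"
  proof
    assume "f \<in> N_alpha \<alpha> K M N"
    then obtain u x y where f: "f \<in> N" "f = {u, x}" "u \<notin> VM" "{x, y} \<in> fst ` M" "x \<noteq> y"
      "real (card {c \<in> C_N M N. has_edge K c u y}) \<le> \<alpha> * real (card (C_N M N))"
      unfolding N_alpha_def VM_def by blast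
    have fe: "f = {vv f, xx f}" using Nprop[OF f(1)] by (rule conjunct1)
    have xv: "xx f \<in> VM" using Nx[OF f(1)] .
    have "u \<in> f" "x \<in> f" using mem2[OF f(2)] by auto
    have "u = vv f \<or> u = xx f" using in2[OF fe \<open>u \<in> f\<close>] .
    hence uv: "u = vv f" using f(3) xv by metis
    have "x = vv f \<or> x = xx f" using in2[OF fe \<open>x \<in> f\<close>] .
    moreover have "x \<noteq> vv f"
    proof
      assume xv': "x = vv f"
      have "xx f = u \<or> xx f = x" using in2[OF f(2)] Nmem[OF f(1)] by blast
      hence "xx f = vv f" using uv xv' by metis
      thus False using xv Nv[OF f(1)] UVM' by metis
    qed
    ultimately have xx: "x = xx f" by simp
    obtain p where p: "p \<in> M" "fst p = {x, y}" using f(4) by auto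
    have "me (xx f) = p" using me_eq[OF p(1)] p(2) xx by simp
    hence "{xx f, y} = {xx f, yy f}" using blk[OF f(1)] p(2) xx by simp
    hence yy: "y = yy f" using f(5) xx by (metis doubleton_eq_iff)
    have "{c \<in> C_N M N. has_edge K c u y} = D f" unfolding D_def CN_eq uv yy ..
    thus "f \<in> {a \<in> N. real (card (D a)) \<le> \<alpha> * real (card N)}" using f(1) f(6) CN_card by simp
  next
    assume a: "f \<in> {a \<in> N. real (card (D a)) \<le> \<alpha> * real (card N)}"
    hence fN: "f \<in> N" by simp
    have "f = {vv f, xx f}" using Nprop[OF fN] by (rule conjunct1)
    moreover have "vv f \<notin> matched_verts M" using Nv[OF fN] UVM unfolding VM_def by blast
    moreover have "{xx f, yy f} \<in> fst ` M" using blk[OF fN] by (metis image_eqI)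
    moreover have "xx f \<noteq> yy f" using xy_ne[OF fN] .
    moreover have "real (card {c \<in> C_N M N. has_edge K c (vv f) (yy f)}) \<le> \<alpha> * real (card (C_N M N))"
      using a card_image[OF inj_col] unfolding D_def CN_eq by simp
    ultimately show "f \<in> N_alpha \<alpha> K M N" unfolding N_alpha_def using fN by blast
  qed
qed

lemma cardVM: "card VM \<le> 2 * card M"
proof -
  have "VM = (\<Union>p\<in>M. fst p)" unfolding VM_def matched_verts_def by simp
  hence "card VM \<le> (\<Sum>p\<in>M. card (fst p))" using card_UN_le[OF Mfin, of fst] by simp
  also have "\<dots> \<le> of_nat (card M) * 2"
  proof (rule sum_bounded_above)
    fix p assume "p \<in> M"
    then obtain x y where "fst p = {x,y}" using Medge[of "fst p" "snd p"] by auto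
    thus "card (fst p) \<le> 2" using card2_le by simp
  qed
  finally show ?thesis by simp
qed


lemma final:
  fixes \<alpha> \<gamma> :: real
  assumes a: "0 < \<alpha>" "\<alpha> < 1" and g: "\<gamma> > 0" and wv: "w = (3 - \<gamma>) * real n"
    and NM: "real (card N) \<ge> (1 - \<gamma>) * real (card M)"
  shows "(1 - \<alpha>) * real (card (N_alpha \<alpha> K M N)) \<le> 2 * \<gamma> * real n + 4"
proof (cases "N = {}")
  case True
  hence "N_alpha \<alpha> K M N = {}" unfolding Nalpha_eq by simp
  thus ?thesis using g by simp
next
  case False
  define k where "k = card N"
  define L where "L = card (VM - yy ` N)"
  define A where "A = N_alpha \<alpha> K M N"
  define m where "m = card M"
  have kpos: "real k > 0" using False Nfin unfolding k_def by (simp add: card_gt_0_iff)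
  have AN: "A \<subseteq> N" unfolding A_def Nalpha_eq by blast
  have Afin: "finite A" using AN Nfin finite_subset by blast
  have pc: "w \<le> real (2 * L + card (dset e) + card (exset e) + 2)" if eN: "e \<in> N" for e
  proof -
    have "col e \<in> C" using col_C[OF eN] .
    hence "w \<le> real (card (\<Union>(K (col e))))" by (rule cover)
    moreover have "card (\<Union>(K (cc e))) \<le> 2 * L + card (dset e) + card (exset e) + 2"
      using col_bound[OF eN] unfolding L_def .
    moreover have "cc e = col e" by (rule cc_eq[OF eN])
    ultimately show ?thesis by simp
  qed
  have s1: "real k * w \<le> real (\<Sum>e\<in>N. 2 * L + card (dset e) + card (exset e) + 2)"
  proof -
    have "real k * w = (\<Sum>e\<in>N. w)" unfolding k_def by simp
    also have "\<dots> \<le> (\<Sum>e\<in>N. real (2 * L + card (dset e) + card (exset e) + 2))"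
      by (rule sum_mono) (rule pc)
    also have "\<dots> = real (\<Sum>e\<in>N. 2 * L + card (dset e) + card (exset e) + 2)"
      by (rule of_nat_sum[symmetric])
    finally show ?thesis .
  qed
  have s2: "(\<Sum>e\<in>N. 2 * L + card (dset e) + card (exset e) + 2) =
      k * (2 * L + 2) + (\<Sum>e\<in>N. card (dset e)) + (\<Sum>e\<in>N. card (exset e))"
  proof -
    have "(\<Sum>e\<in>N. 2 * L + card (dset e) + card (exset e) + 2) =
        (\<Sum>e\<in>N. (2 * L + 2) + (card (dset e) + card (exset e)))" by (rule sum.cong) simp_all
    also have "\<dots> = (\<Sum>e\<in>N. 2 * L + 2) + (\<Sum>e\<in>N. card (dset e) + card (exset e))"
      by (rule sum.distrib)
    also have "(\<Sum>e\<in>N. card (dset e) + card (exset e)) = (\<Sum>e\<in>N. card (dset e)) + (\<Sum>e\<in>N. card (exset e))"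
      by (rule sum.distrib)
    finally show ?thesis unfolding k_def by simp
  qed
  have s3: "real (\<Sum>a\<in>N. card (D a)) \<le> \<alpha> * real k * real (card A) + real k * (real k - real (card A))"
  proof -
    have "real (\<Sum>a\<in>N. card (D a)) = (\<Sum>a\<in>N. real (card (D a)))" by (rule of_nat_sum)
    also have "\<dots> \<le> (\<Sum>a\<in>N. if a \<in> A then \<alpha> * real k else real k)"
    proof (rule sum_mono)
      fix a assume aN: "a \<in> N"
      show "real (card (D a)) \<le> (if a \<in> A then \<alpha> * real k else real k)"
      proof (cases "a \<in> A")
        case True thus ?thesis unfolding A_def Nalpha_eq k_def by simp
      next
        case False thus ?thesis using D_le[of a] unfolding k_def by simp
      qed
    qed
    also have "\<dots> = (\<Sum>a\<in>N \<inter> {x. x \<in> A}. \<alpha> * real k) + (\<Sum>a\<in>N \<inter> - {x. x \<in> A}. real k)"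
      by (rule sum.If_cases[OF Nfin])
    also have "N \<inter> {x. x \<in> A} = A" using AN by blast
    also have "N \<inter> - {x. x \<in> A} = N - A" by blast
    also have "card (N - A) = k - card A" unfolding k_def using card_Diff_subset[OF Afin AN] .
    hence "(\<Sum>a\<in>N - A. real k) = real k * (real k - real (card A))"
      using card_mono[OF Nfin AN] unfolding k_def by (simp add: of_nat_diff)
    finally show ?thesis by (simp add: algebra_simps)
  qed
  have s4: "real L + real k \<le> 2 * real m"
  proof -
    have sub: "yy ` N \<subseteq> VM" using Ny by blast
    have "card (yy ` N) = k" unfolding k_def using card_image[OF inj_yy] .
    moreover have "L = card VM - card (yy ` N)" unfolding L_def using card_Diff_subset[OF finite_subset[OF sub VMfin] sub] .
    moreover have "card (yy ` N) \<le> card VM" using card_mono[OF VMfin sub] .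
    ultimately have "L + k = card VM" by simp
    thus ?thesis using cardVM unfolding m_def by linarith
  qed
  have s5: "real m \<le> real n" using cardM unfolding m_def by simp
  have s6: "real k \<ge> (1 - \<gamma>) * real m" using NM unfolding k_def m_def .
  have dd: "(\<Sum>e\<in>N. card (dset e)) = (\<Sum>a\<in>N. card (D a))" by (rule dsum)
  have ee: "(\<Sum>e\<in>N. card (exset e)) \<le> 2 * k" using exsum unfolding k_def .
  define X where "X = (\<Sum>e\<in>N. 2 * L + card (dset e) + card (exset e) + 2)"
  define SD where "SD = (\<Sum>e\<in>N. card (dset e))"
  define SE where "SE = (\<Sum>e\<in>N. card (exset e))"
  define SDa where "SDa = (\<Sum>a\<in>N. card (D a))"
  have t1: "real k * w \<le> real X" using s1 unfolding X_def .
  have t2: "X = k * (2 * L + 2) + SD + SE" using s2 unfolding X_def SD_def SE_def .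
  have t3: "real X = real k * (2 * real L + 2) + real SD + real SE" unfolding t2 by (simp add: algebra_simps)
  have t4: "SD = SDa" using dd unfolding SD_def SDa_def .
  have t5: "real SDa \<le> \<alpha> * real k * real (card A) + real k * (real k - real (card A))"
    using s3 unfolding SDa_def .
  have t6: "real SE \<le> 2 * real k" using ee unfolding SE_def by linarith
  have "real k * w \<le> real k * (2 * real L + 2) + \<alpha> * real k * real (card A) + real k * (real k - real (card A)) + 2 * real k"
    using t1 t3 t4 t5 t6 by linarith
  hence "real k * (w + (1 - \<alpha>) * real (card A)) \<le> real k * (2 * real L + 4 + real k)"
    by (simp add: algebra_simps)
  hence s7: "w + (1 - \<alpha>) * real (card A) \<le> 2 * real L + 4 + real k"
    using kpos by (rule mult_left_le_imp_le)
  have "\<gamma> * real m \<le> \<gamma> * real n" using s5 g by (simp add: mult_left_mono)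
  hence "(1 - \<alpha>) * real (card A) \<le> 2 * \<gamma> * real n + 4"
    using s7 s4 s5 s6 wv by (simp add: algebra_simps)
  thus ?thesis unfolding A_def .
qed

end

theorem lemma2p9:
  fixes \<gamma> \<alpha> :: real
  assumes "\<gamma> > 0" and "0 < \<alpha>" and "\<alpha> < 1"
  shows "\<exists>n0::nat. \<forall>n\<ge>n0. \<forall>(V::nat set) (C::nat set) (K::nat \<Rightarrow> nat set set)
            (M::(nat set \<times> nat) set) (N::nat set set).
     nv_multigraph V C K n ((3 - \<gamma>) * real n) \<and>
     max_rainbow_matching C K M \<and>
     aux_matching 7 V C K M N \<and>
     real (card N) \<ge> (1 - \<gamma>) * real (card M)
     \<longrightarrow> real (card (N_alpha \<alpha> K M N)) \<le> 20 * \<gamma> / (1 - \<alpha>) * real n"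
proof (intro exI allI impI)
  fix n :: nat and V :: "nat set" and C :: "nat set" and K :: "nat \<Rightarrow> nat set set"
    and M :: "(nat set \<times> nat) set" and N :: "nat set set"
  assume n: "nat \<lceil>1 / \<gamma>\<rceil> \<le> n"
  assume h: "nv_multigraph V C K n ((3 - \<gamma>) * real n) \<and>
     max_rainbow_matching C K M \<and> aux_matching 7 V C K M N \<and>
     real (card N) \<ge> (1 - \<gamma>) * real (card M)"
  have R: "rsw V C K M N n ((3 - \<gamma>) * real n)" unfolding rsw_def using h by blast
  have fin: "(1 - \<alpha>) * real (card (N_alpha \<alpha> K M N)) \<le> 2 * \<gamma> * real n + 4"
    using rsw.final[OF R assms(2) assms(3) assms(1) refl] h by blast
  have "1 / \<gamma> \<le> real n" using n by linarith
  hence "1 \<le> \<gamma> * real n" using assms(1) by (simp add: field_simps)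
  hence "(1 - \<alpha>) * real (card (N_alpha \<alpha> K M N)) \<le> 20 * \<gamma> * real n" using fin by linarith
  moreover have "0 < 1 - \<alpha>" using assms(3) by simp
  ultimately show "real (card (N_alpha \<alpha> K M N)) \<le> 20 * \<gamma> / (1 - \<alpha>) * real n"
    by (simp add: field_simps)
qed

end
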